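(* Let $P=\{S_1,\ldots,S_n\}$ be a homothetic square packing with contact graph $G=([n],E)$ whose radii satisfy the weak generic condition. Then there do not exist six distinct vertices $a_1,\ldots,a_6\in[n]$ such that all of the pairs $\{a_1,a_2\},\{a_1,a_4\},\{a_1,a_5\},\{a_2,a_3\},\{a_2,a_4\},\{a_2,a_5\},\{a_2,a_6\},\{a_3,a_5\},\{a_3,a_6\},\{a_4,a_5\},\{a_5,a_6\}$ are edges of $G$.
   Context: Let $S=\{(x,y): -1\le x,y\le 1\}$. A homothetic packing of $n$ squares is a set $P=\{S_1,\ldots,S_n\}$ with $S_i=r_iS+p_i$, $r_i>0$ (radii), $p_i\in\mathbb{R}^2$ (centres), such that distinct squares have disjoint interiors. Its contact graph is $G=([n],E)$ where $\{i,j\}\in E$ iff $i\ne j$ and $S_i\cap S_j\ne\emptyset$. The radii satisfy the weak generic condition if the only function $\sigma:[n]\to\{-1,0,1\}$ with at least $4$ zeroes and $\sum_{i=1}^n\sigma_ir_i=0$ is the zero function. *)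

theory Defs
  imports "HOL-Analysis.Analysis"
begin

definition unit_square :: "(real \<times> real) set" where
  "unit_square = {(x, y). -1 \<le> x \<and> x \<le> 1 \<and> -1 \<le> y \<and> y \<le> 1}"

definition hsquare :: "real \<Rightarrow> real \<times> real \<Rightarrow> (real \<times> real) set" where
  "hsquare r p = (\<lambda>q. r *\<^sub>R q + p) ` unit_square"

definition homothetic_packing :: "nat \<Rightarrow> (nat \<Rightarrow> real) \<Rightarrow> (nat \<Rightarrow> real \<times> real) \<Rightarrow> bool" where
  "homothetic_packing n r p \<longleftrightarrow>
     (\<forall>i\<in>{1..n}. r i > 0) \<and>
     (\<forall>i\<in>{1..n}. \<forall>j\<in>{1..n}. i \<noteq> j \<longrightarrow>
        interior (hsquare (r i) (p i)) \<inter> interior (hsquare (r j) (p j)) = {})"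

definition contact_edge :: "(nat \<Rightarrow> real) \<Rightarrow> (nat \<Rightarrow> real \<times> real) \<Rightarrow> nat \<Rightarrow> nat \<Rightarrow> bool" where
  "contact_edge r p i j \<longleftrightarrow> i \<noteq> j \<and> hsquare (r i) (p i) \<inter> hsquare (r j) (p j) \<noteq> {}"

definition weak_generic :: "nat \<Rightarrow> (nat \<Rightarrow> real) \<Rightarrow> bool" where
  "weak_generic n r \<longleftrightarrow>
     (\<forall>\<sigma> :: nat \<Rightarrow> int. (\<forall>i\<in>{1..n}. \<sigma> i \<in> {-1, 0, 1}) \<and>
        card {i\<in>{1..n}. \<sigma> i = 0} \<ge> 4 \<and>
        (\<Sum>i\<in>{1..n}. of_int (\<sigma> i) * r i) = 0
        \<longrightarrow> (\<forall>i\<in>{1..n}. \<sigma> i = 0))"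

end

theory Submission
  imports Defs
begin

definition DD :: "real\<Rightarrow>real\<Rightarrow>real\<Rightarrow>real\<Rightarrow>real\<Rightarrow>real\<Rightarrow>bool" where
 "DD x y r x' y' r' \<longleftrightarrow> (\<bar>x - x'\<bar> \<ge> r + r' \<or> \<bar>y - y'\<bar> \<ge> r + r')"
definition TT :: "real\<Rightarrow>real\<Rightarrow>real\<Rightarrow>real\<Rightarrow>real\<Rightarrow>real\<Rightarrow>bool" where
 "TT x y r x' y' r' \<longleftrightarrow> (\<bar>x - x'\<bar> \<le> r + r' \<and> \<bar>y - y'\<bar> \<le> r + r')"
lemma core:
  assumes "r1>0" "r2>0" "r3>0" "r4>0" "r5>0" "r6>0" "r2 \<noteq> r5"
  "DD x1 y1 r1 x2 y2 r2" "DD x1 y1 r1 x3 y3 r3" "DD x1 y1 r1 x4 y4 r4" "DD x1 y1 r1 x5 y5 r5" "DD x1 y1 r1 x6 y6 r6"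
  "DD x2 y2 r2 x3 y3 r3" "DD x2 y2 r2 x4 y4 r4" "DD x2 y2 r2 x5 y5 r5" "DD x2 y2 r2 x6 y6 r6"
  "DD x3 y3 r3 x4 y4 r4" "DD x3 y3 r3 x5 y5 r5" "DD x3 y3 r3 x6 y6 r6"
  "DD x4 y4 r4 x5 y5 r5" "DD x4 y4 r4 x6 y6 r6" "DD x5 y5 r5 x6 y6 r6"
  "TT x1 y1 r1 x2 y2 r2" "TT x1 y1 r1 x5 y5 r5" "TT x2 y2 r2 x3 y3 r3" "TT x2 y2 r2 x4 y4 r4"
  "TT x2 y2 r2 x5 y5 r5" "TT x2 y2 r2 x6 y6 r6" "TT x3 y3 r3 x5 y5 r5" "TT x4 y4 r4 x5 y5 r5" "TT x5 y5 r5 x6 y6 r6"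
  shows False
  using assms unfolding DD_def TT_def by (smt (z3))

lemma hsq_eq:
  assumes "r > 0"
  shows "hsquare r p = {fst p - r .. fst p + r} \<times> {snd p - r .. snd p + r}"
proof
  show "hsquare r p \<subseteq> {fst p - r .. fst p + r} \<times> {snd p - r .. snd p + r}"
  proof
    fix z assume "z \<in> hsquare r p"
    then obtain a b where ab: "(a, b) \<in> unit_square" and z: "z = r *\<^sub>R (a, b) + p"
      unfolding hsquare_def by auto
    have a: "-1 \<le> a" "a \<le> 1" "-1 \<le> b" "b \<le> 1" using ab unfolding unit_square_def by auto
    have "r * a \<le> r * 1" "r * (-1) \<le> r * a" "r * b \<le> r * 1" "r * (-1) \<le> r * b"
      using a assms by (intro mult_left_mono; simp)+
    thus "z \<in> {fst p - r .. fst p + r} \<times> {snd p - r .. snd p + r}"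
      unfolding z by (cases p) auto
  qed
next
  show "{fst p - r .. fst p + r} \<times> {snd p - r .. snd p + r} \<subseteq> hsquare r p"
  proof
    fix z assume z: "z \<in> {fst p - r .. fst p + r} \<times> {snd p - r .. snd p + r}"
    obtain a b where ab: "z = (a, b)" by (cases z)
    define q where "q = ((a - fst p) / r, (b - snd p) / r)"
    have "q \<in> unit_square" using z assms unfolding ab q_def unit_square_def
      by (auto simp: field_simps)
    moreover have "z = r *\<^sub>R q + p" using assms unfolding ab q_def
      by (cases p) (auto simp: field_simps)
    ultimately show "z \<in> hsquare r p" unfolding hsquare_def by blast
  qed
qed

lemma int_hsq:
  assumes "r > 0"
  shows "interior (hsquare r p) = {fst p - r <..< fst p + r} \<times> {snd p - r <..< snd p + r}"
  using assms by (simp add: hsq_eq interior_Times)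

lemma disjD:
  assumes "r > 0" "r' > 0" "interior (hsquare r p) \<inter> interior (hsquare r' p') = {}"
  shows "DD (fst p) (snd p) r (fst p') (snd p') r'"
proof (rule ccontr)
  assume "\<not> ?thesis"
  hence h: "\<bar>fst p - fst p'\<bar> < r + r'" "\<bar>snd p - snd p'\<bar> < r + r'" unfolding DD_def by auto
  define u where "u = (max (fst p - r) (fst p' - r') + min (fst p + r) (fst p' + r')) / 2"
  define v where "v = (max (snd p - r) (snd p' - r') + min (snd p + r) (snd p' + r')) / 2"
  have "(u, v) \<in> interior (hsquare r p) \<inter> interior (hsquare r' p')"
    using assms(1,2) h unfolding int_hsq[OF assms(1)] int_hsq[OF assms(2)] u_def v_def
    by (auto simp: abs_less_iff max_def min_def)
  with assms(3) show False by auto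
qed

lemma touchT:
  assumes "r > 0" "r' > 0" "contact_edge r0 p0 i j" "r = r0 i" "r' = r0 j" "p = p0 i" "p' = p0 j"
  shows "TT (fst p) (snd p) r (fst p') (snd p') r'"
proof -
  from assms(3) obtain z where "z \<in> hsquare r p" "z \<in> hsquare r' p'"
    unfolding contact_edge_def assms(4-7) by blast
  thus ?thesis unfolding hsq_eq[OF assms(1)] hsq_eq[OF assms(2)] TT_def
    by (cases z) (auto simp: abs_le_iff)
qed

lemma card6_distinct:
  assumes "card {a1, a2, a3, a4, a5, a6::nat} = 6"
  shows "a1 \<noteq> a2 \<and> a1 \<noteq> a3 \<and> a1 \<noteq> a4 \<and> a1 \<noteq> a5 \<and> a1 \<noteq> a6 \<and> a2 \<noteq> a3 \<and> a2 \<noteq> a4 \<and>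
         a2 \<noteq> a5 \<and> a2 \<noteq> a6 \<and> a3 \<noteq> a4 \<and> a3 \<noteq> a5 \<and> a3 \<noteq> a6 \<and> a4 \<noteq> a5 \<and> a4 \<noteq> a6 \<and> a5 \<noteq> a6"
proof (rule ccontr)
  assume "\<not> ?thesis"
  hence "card {a1, a2, a3, a4, a5, a6} \<le> 5"
    by (auto simp: card_insert_if insert_commute) 
  with assms show False by simp
qed

lemma radii_ne:
  assumes wg: "weak_generic n r" and sub: "{a, b} \<subseteq> {1..n}" and ab: "a \<noteq> b" and n6: "n \<ge> 6"
  shows "r a \<noteq> r b"
proof
  assume eq: "r a = r b"
  define \<sigma> :: "nat \<Rightarrow> int" where "\<sigma> i = (if i = a then 1 else if i = b then -1 else 0)" for i
  have s1: "\<forall>i\<in>{1..n}. \<sigma> i \<in> {-1, 0, 1}" by (auto simp: \<sigma>_def)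
  have "{i\<in>{1..n}. \<sigma> i = 0} = {1..n} - {a, b}" by (auto simp: \<sigma>_def)
  hence "card {i\<in>{1..n}. \<sigma> i = 0} = n - 2" using sub ab by (simp add: card_Diff_subset)
  hence s2: "card {i\<in>{1..n}. \<sigma> i = 0} \<ge> 4" using n6 by simp
  have "(\<Sum>i\<in>{1..n}. of_int (\<sigma> i) * r i) = (\<Sum>i\<in>{1..n}. (if i = a then r i else 0) + (if i = b then - r i else 0))"
    using ab by (intro sum.cong) (auto simp: \<sigma>_def)
  also have "\<dots> = r a - r b" using sub by (simp add: sum.distrib)
  finally have s3: "(\<Sum>i\<in>{1..n}. of_int (\<sigma> i) * r i) = 0" using eq by simp
  have "\<forall>i\<in>{1..n}. \<sigma> i = 0" using wg s1 s2 s3 unfolding weak_generic_def by blast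
  hence "\<sigma> a = 0" using sub by auto
  thus False by (simp add: \<sigma>_def)
qed

theorem lemma18:
  fixes n :: nat and r :: "nat \<Rightarrow> real" and p :: "nat \<Rightarrow> real \<times> real"
  assumes "homothetic_packing n r p"
    and "weak_generic n r"
  shows "\<not> (\<exists>a1 a2 a3 a4 a5 a6.
            {a1, a2, a3, a4, a5, a6} \<subseteq> {1..n} \<and> card {a1, a2, a3, a4, a5, a6} = 6 \<and>
            contact_edge r p a1 a2 \<and> contact_edge r p a1 a4 \<and> contact_edge r p a1 a5 \<and>
            contact_edge r p a2 a3 \<and> contact_edge r p a2 a4 \<and> contact_edge r p a2 a5 \<and>
            contact_edge r p a2 a6 \<and> contact_edge r p a3 a5 \<and> contact_edge r p a3 a6 \<and>
            contact_edge r p a4 a5 \<and> contact_edge r p a5 a6)"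
proof
  assume "\<exists>a1 a2 a3 a4 a5 a6.
            {a1, a2, a3, a4, a5, a6} \<subseteq> {1..n} \<and> card {a1, a2, a3, a4, a5, a6} = 6 \<and>
            contact_edge r p a1 a2 \<and> contact_edge r p a1 a4 \<and> contact_edge r p a1 a5 \<and>
            contact_edge r p a2 a3 \<and> contact_edge r p a2 a4 \<and> contact_edge r p a2 a5 \<and>
            contact_edge r p a2 a6 \<and> contact_edge r p a3 a5 \<and> contact_edge r p a3 a6 \<and>
            contact_edge r p a4 a5 \<and> contact_edge r p a5 a6"
  then obtain a1 a2 a3 a4 a5 a6 where
    sub: "{a1, a2, a3, a4, a5, a6} \<subseteq> {1..n}" and c6: "card {a1, a2, a3, a4, a5, a6} = 6" and
    e: "contact_edge r p a1 a2" "contact_edge r p a1 a4" "contact_edge r p a1 a5"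
       "contact_edge r p a2 a3" "contact_edge r p a2 a4" "contact_edge r p a2 a5"
       "contact_edge r p a2 a6" "contact_edge r p a3 a5" "contact_edge r p a3 a6"
       "contact_edge r p a4 a5" "contact_edge r p a5 a6"
    by blast
  note dist = card6_distinct[OF c6]
  have "6 \<le> card {1..n}" using card_mono[OF _ sub] c6 by simp
  hence n6: "n \<ge> 6" by simp
  have ne: "r a2 \<noteq> r a5" using radii_ne[OF assms(2) _ _ n6, of a2 a5] sub dist by auto
  have hp1: "\<forall>i\<in>{1..n}. r i > 0" and
    hp2: "\<forall>i\<in>{1..n}. \<forall>j\<in>{1..n}. i \<noteq> j \<longrightarrow>
        interior (hsquare (r i) (p i)) \<inter> interior (hsquare (r j) (p j)) = {}"
    using assms(1) unfolding homothetic_packing_def by simp_all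
  have pos: "r i > 0" if "i \<in> {1..n}" for i using hp1 that by simp
  have dj: "DD (fst (p i)) (snd (p i)) (r i) (fst (p j)) (snd (p j)) (r j)"
    if "i \<in> {1..n}" "j \<in> {1..n}" "i \<noteq> j" for i j
  proof -
    have "interior (hsquare (r i) (p i)) \<inter> interior (hsquare (r j) (p j)) = {}"
      using hp2 that by simp
    thus ?thesis by (rule disjD[OF pos[OF that(1)] pos[OF that(2)]])
  qed
  have tt: "TT (fst (p i)) (snd (p i)) (r i) (fst (p j)) (snd (p j)) (r j)"
    if "i \<in> {1..n}" "j \<in> {1..n}" "contact_edge r p i j" for i j
    by (rule touchT[OF pos[OF that(1)] pos[OF that(2)] that(3) refl refl refl refl])
  have m: "a1 \<in> {1..n}" "a2 \<in> {1..n}" "a3 \<in> {1..n}" "a4 \<in> {1..n}" "a5 \<in> {1..n}" "a6 \<in> {1..n}"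
    using sub by auto
  have dd: "a1 \<noteq> a2" "a1 \<noteq> a3" "a1 \<noteq> a4" "a1 \<noteq> a5" "a1 \<noteq> a6" "a2 \<noteq> a3" "a2 \<noteq> a4" "a2 \<noteq> a5" "a2 \<noteq> a6" "a3 \<noteq> a4" "a3 \<noteq> a5" "a3 \<noteq> a6" "a4 \<noteq> a5" "a4 \<noteq> a6" "a5 \<noteq> a6"
    using dist by simp_all
  show False
    by (rule core[OF pos[OF m(1)] pos[OF m(2)] pos[OF m(3)] pos[OF m(4)] pos[OF m(5)] pos[OF m(6)] ne
      dj[OF m(1) m(2) dd(1)]
      dj[OF m(1) m(3) dd(2)]
      dj[OF m(1) m(4) dd(3)]
      dj[OF m(1) m(5) dd(4)]
      dj[OF m(1) m(6) dd(5)]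
      dj[OF m(2) m(3) dd(6)]
      dj[OF m(2) m(4) dd(7)]
      dj[OF m(2) m(5) dd(8)]
      dj[OF m(2) m(6) dd(9)]
      dj[OF m(3) m(4) dd(10)]
      dj[OF m(3) m(5) dd(11)]
      dj[OF m(3) m(6) dd(12)]
      dj[OF m(4) m(5) dd(13)]
      dj[OF m(4) m(6) dd(14)]
      dj[OF m(5) m(6) dd(15)]
      tt[OF m(1) m(2) e(1)]
      tt[OF m(1) m(5) e(3)]
      tt[OF m(2) m(3) e(4)]
      tt[OF m(2) m(4) e(5)]
      tt[OF m(2) m(5) e(6)]
      tt[OF m(2) m(6) e(7)]
      tt[OF m(3) m(5) e(8)]
      tt[OF m(4) m(5) e(10)]
      tt[OF m(5) m(6) e(11)]])
qed

end
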